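(* Let $P=\mathbb{Q}[x_1,\dots,x_n]$ and let $\sigma$ be a term ordering on $\mathbb{T}^n$. Let $I$ be a non-zero ideal in $P$, and let $G_\sigma=\{g_1,\dots,g_r\}$ be its reduced $\sigma$-Gröbner basis, indexed so that $\mathrm{LT}_\sigma(g_1)<_\sigma\cdots<_\sigma \mathrm{LT}_\sigma(g_r)$. Let $\tilde G=\{\tilde g_1,\dots,\tilde g_s\}$ be a minimal strong $\sigma$-Gröbner basis of the ideal $J=\langle \operatorname{prim}(G_\sigma)\rangle\subseteq\mathbb{Z}[x_1,\dots,x_n]$. Then: (a) the elements of $\tilde G$ can be indexed so that $\mathrm{LT}_\sigma(\tilde g_i)=\mathrm{LT}_\sigma(g_i)$ for $i=1,\dots,r$, while for $i=r+1,\dots,s$ each $\mathrm{LT}_\sigma(\tilde g_i)$ is a proper multiple of $\mathrm{LT}_\sigma(g_k)$ for some $k\le r$; (b) with this indexing, the subset $\{\tilde g_1,\dots,\tilde g_r\}$ is a minimal $\sigma$-Gröbner basis of $I$ in $P$; (c) with this indexing, $\mathrm{LC}_\sigma(\tilde g_i)$ divides $\mathrm{LC}_\sigma(\operatorname{prim}(g_i))$ for $i=1,\dots,r$; (d) with this indexing, if for some $i\in\{1,\dots,r\}$ there is a prime $p$ such that $p\mid\operatorname{den}(g_i)$ but $p\nmid\operatorname{den}(g_j)$ for every $j=1,\dots,i-1$, then $p\mid \mathrm{LC}_\sigma(\tilde g_i)$.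
   Context: $\mathbb{T}^n$ is the monoid of power-products in $x_1,\dots,x_n$; $\mathrm{LT}_\sigma$, $\mathrm{LC}_\sigma$, $\mathrm{LM}_\sigma$ denote leading power-product (term), leading coefficient and leading monomial $\mathrm{LC}_\sigma(f)\cdot\mathrm{LT}_\sigma(f)$. For $f\in P$, $\operatorname{den}(f)$ is the positive least common multiple of the denominators of the coefficients of $f$. For non-zero $f\in P$, with $c$ the integer content of $f\cdot\operatorname{den}(f)\in\mathbb{Z}[x_1,\dots,x_n]$, the primitive integral part is $\operatorname{prim}(f)=c^{-1}f\cdot\operatorname{den}(f)$; for a set $F$, $\operatorname{prim}(F)=\{\operatorname{prim}(f):f\in F\}$. Non-zero polynomials $g_1,\dots,g_s\in\mathbb{Z}[x_1,\dots,x_n]$ form a strong $\sigma$-Gröbner basis of $J=\langle g_1,\dots,g_s\rangle$ if for each non-zero $f\in J$ some $\mathrm{LM}_\sigma(g_i)$ divides $\mathrm{LM}_\sigma(f)$ in $\mathbb{Z}[x_1,\dots,x_n]$; it is minimal if moreover $\mathrm{LM}_\sigma(g_i)\nmid\mathrm{LM}_\sigma(g_j)$ whenever $i\neq j$. *)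

theory Defs
  imports Complex_Main "HOL-Library.Poly_Mapping" "HOL-Computational_Algebra.Primes"
begin

text \<open>Power-products in the variables indexed by the finite type 'v are
  finitely supported exponent vectors (multiplication of power-products
  is addition of exponent vectors, 1 is 0).\<close>

type_synonym 'v pp = "'v \<Rightarrow>\<^sub>0 nat"
type_synonym ('v, 'a) mpoly = "'v pp \<Rightarrow>\<^sub>0 'a"

definition pp_dvd :: "'v pp \<Rightarrow> 'v pp \<Rightarrow> bool" where
  "pp_dvd s t \<longleftrightarrow> (\<exists>u. t = s + u)"

definition pp_proper_multiple :: "'v pp \<Rightarrow> 'v pp \<Rightarrow> bool" where
  "pp_proper_multiple t s \<longleftrightarrow> (\<exists>u. u \<noteq> 0 \<and> t = s + u)"

definition term_order :: "('v pp \<Rightarrow> 'v pp \<Rightarrow> bool) \<Rightarrow> bool" where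
  "term_order le \<longleftrightarrow>
     (\<forall>t. le t t) \<and>
     (\<forall>s t. le s t \<and> le t s \<longrightarrow> s = t) \<and>
     (\<forall>s t u. le s t \<and> le t u \<longrightarrow> le s u) \<and>
     (\<forall>s t. le s t \<or> le t s) \<and>
     (\<forall>t. le 0 t) \<and>
     (\<forall>s t u. le s t \<longrightarrow> le (s + u) (t + u))"

definition LT :: "('v pp \<Rightarrow> 'v pp \<Rightarrow> bool) \<Rightarrow> ('v, 'a::zero) mpoly \<Rightarrow> 'v pp" where
  "LT le f = (THE t. t \<in> Poly_Mapping.keys f \<and> (\<forall>s\<in>Poly_Mapping.keys f. le s t))"

definition LC :: "('v pp \<Rightarrow> 'v pp \<Rightarrow> bool) \<Rightarrow> ('v, 'a::zero) mpoly \<Rightarrow> 'a" where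
  "LC le f = Poly_Mapping.lookup f (LT le f)"

definition LM :: "('v pp \<Rightarrow> 'v pp \<Rightarrow> bool) \<Rightarrow> ('v, 'a::zero) mpoly \<Rightarrow> ('v, 'a) mpoly" where
  "LM le f = Poly_Mapping.single (LT le f) (LC le f)"

definition is_ideal :: "'a::comm_ring_1 set \<Rightarrow> bool" where
  "is_ideal I \<longleftrightarrow> 0 \<in> I \<and> (\<forall>a\<in>I. \<forall>b\<in>I. a + b \<in> I) \<and> (\<forall>a\<in>I. \<forall>c. c * a \<in> I)"

definition ideal_gen :: "'a::comm_ring_1 set \<Rightarrow> 'a set" where
  "ideal_gen F = {p. \<exists>S c. finite S \<and> S \<subseteq> F \<and> p = (\<Sum>f\<in>S. c f * f)}"

definition is_GB :: "('v pp \<Rightarrow> 'v pp \<Rightarrow> bool) \<Rightarrow> ('v, rat) mpoly set \<Rightarrow> ('v, rat) mpoly set \<Rightarrow> bool" where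
  "is_GB le G I \<longleftrightarrow> finite G \<and> 0 \<notin> G \<and> ideal_gen G = I \<and>
     (\<forall>f\<in>I. f \<noteq> 0 \<longrightarrow> (\<exists>g\<in>G. pp_dvd (LT le g) (LT le f)))"

definition is_minimal_GB :: "('v pp \<Rightarrow> 'v pp \<Rightarrow> bool) \<Rightarrow> ('v, rat) mpoly set \<Rightarrow> ('v, rat) mpoly set \<Rightarrow> bool" where
  "is_minimal_GB le G I \<longleftrightarrow> is_GB le G I \<and>
     (\<forall>g\<in>G. \<forall>h\<in>G. g \<noteq> h \<longrightarrow> \<not> pp_dvd (LT le g) (LT le h))"

definition is_reduced_GB :: "('v pp \<Rightarrow> 'v pp \<Rightarrow> bool) \<Rightarrow> ('v, rat) mpoly set \<Rightarrow> ('v, rat) mpoly set \<Rightarrow> bool" where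
  "is_reduced_GB le G I \<longleftrightarrow> is_minimal_GB le G I \<and>
     (\<forall>g\<in>G. LC le g = 1) \<and>
     (\<forall>g\<in>G. \<forall>t\<in>Poly_Mapping.keys g. t \<noteq> LT le g \<longrightarrow> (\<forall>h\<in>G. \<not> pp_dvd (LT le h) t))"

definition is_strong_GB :: "('v pp \<Rightarrow> 'v pp \<Rightarrow> bool) \<Rightarrow> ('v, int) mpoly set \<Rightarrow> ('v, int) mpoly set \<Rightarrow> bool" where
  "is_strong_GB le G J \<longleftrightarrow> finite G \<and> 0 \<notin> G \<and> ideal_gen G = J \<and>
     (\<forall>f\<in>J. f \<noteq> 0 \<longrightarrow> (\<exists>g\<in>G. LM le g dvd LM le f))"

definition is_minimal_strong_GB :: "('v pp \<Rightarrow> 'v pp \<Rightarrow> bool) \<Rightarrow> ('v, int) mpoly set \<Rightarrow> ('v, int) mpoly set \<Rightarrow> bool" where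
  "is_minimal_strong_GB le G J \<longleftrightarrow> is_strong_GB le G J \<and>
     (\<forall>g\<in>G. \<forall>h\<in>G. g \<noteq> h \<longrightarrow> \<not> LM le g dvd LM le h)"

definition den :: "('v, rat) mpoly \<Rightarrow> int" where
  "den f = Lcm ((\<lambda>t. snd (quotient_of (Poly_Mapping.lookup f t))) ` Poly_Mapping.keys f)"

definition prim :: "('v, rat) mpoly \<Rightarrow> ('v, int) mpoly" where
  "prim f = (let d = den f;
                 h = Poly_Mapping.map (\<lambda>q. fst (quotient_of (q * of_int d))) f;
                 c = Gcd ((\<lambda>t. Poly_Mapping.lookup h t) ` Poly_Mapping.keys h)
             in Poly_Mapping.map (\<lambda>a. a div c) h)"

definition to_rat_poly :: "('v, int) mpoly \<Rightarrow> ('v, rat) mpoly" where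
  "to_rat_poly f = Poly_Mapping.map rat_of_int f"

end

theory Submission
  imports Defs
begin


lemma to_props:
  shows "term_order le \<Longrightarrow> \<forall>t. le t t" "term_order le \<Longrightarrow> \<forall>s t. le s t \<and> le t s \<longrightarrow> s = t"
    "term_order le \<Longrightarrow> \<forall>s t u. le s t \<and> le t u \<longrightarrow> le s u" "term_order le \<Longrightarrow> \<forall>s t. le s t \<or> le t s"
    "term_order le \<Longrightarrow> \<forall>t. le 0 t" "term_order le \<Longrightarrow> \<forall>s t u. le s t \<longrightarrow> le (s + u) (t + u)"
  unfolding term_order_def by (elim conjE, assumption)+

lemma to_refl: "term_order le \<Longrightarrow> le t t" using to_props(1) by blast
lemma to_antisym: "term_order le \<Longrightarrow> le s t \<Longrightarrow> le t s \<Longrightarrow> s = t"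
  using to_props(2)[rule_format, of le s t] by blast
lemma to_trans: "term_order le \<Longrightarrow> le s t \<Longrightarrow> le t u \<Longrightarrow> le s u"
  using to_props(3)[rule_format, of le s t u] by blast
lemma to_total: "term_order le \<Longrightarrow> le s t \<or> le t s"
  using to_props(4)[rule_format, of le s t] by blast
lemma to_zero: "term_order le \<Longrightarrow> le 0 t"
  using to_props(5)[rule_format, of le t] by blast
lemma to_mono: "term_order le \<Longrightarrow> le s t \<Longrightarrow> le (s + u) (t + u)"
  using to_props(6)[rule_format, of le s t u] by blast
lemma to_mono_left: assumes "term_order le" "le s t" shows "le (u + s) (u + t)"
proof -
  have "le (s + u) (t + u)" by (rule to_mono[OF assms])
  then show ?thesis by (simp only: add.commute)
qed
lemma to_dvd: assumes "term_order le" "pp_dvd s t" shows "le s t"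
proof -
  obtain u where u: "t = s + u" using assms(2) unfolding pp_dvd_def by blast
  have "le (0 + s) (u + s)" by (rule to_mono[OF assms(1) to_zero[OF assms(1)]])
  then show ?thesis using u by (simp only: add.commute add_0)
qed
lemma pp_dvd_antisym:
  fixes s t :: "'v pp" and le :: "'v pp \<Rightarrow> 'v pp \<Rightarrow> bool"
  assumes "term_order le" "pp_dvd s t" "pp_dvd t s" shows "s = t"
  by (rule to_antisym[OF assms(1) to_dvd[OF assms(1,2)] to_dvd[OF assms(1,3)]])
lemma pp_dvd_trans:
  fixes s t u :: "'v pp"
  assumes "pp_dvd s t" "pp_dvd t u" shows "pp_dvd s u"
proof -
  obtain a where a: "t = s + a" using assms(1) unfolding pp_dvd_def by blast
  obtain b where b: "u = t + b" using assms(2) unfolding pp_dvd_def by blast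
  have "u = s + (a + b)" using a b by (simp add: add.assoc)
  then show ?thesis unfolding pp_dvd_def by blast
qed
lemma pp_dvd_refl: "pp_dvd (t::'v pp) t"
proof -
  have "t = t + 0" by simp
  then show ?thesis unfolding pp_dvd_def by blast
qed

lemma finite_max_exists:
  assumes "term_order le" "finite A" "A \<noteq> {}" shows "\<exists>t\<in>A. \<forall>s\<in>A. le s t"
  using assms(2,3)
proof (induction A rule: finite_ne_induct)
  case (singleton x) then show ?case using to_refl[OF assms(1)] by auto
next
  case (insert x F)
  then obtain t where t: "t\<in>F" "\<forall>s\<in>F. le s t" by blast
  show ?case
  proof (cases "le x t")
    case True
    have "\<forall>s\<in>insert x F. le s t" using True t(2) by simp
    then show ?thesis using t(1) by blast
  next
    case False then have xt: "le t x" using to_total[OF assms(1), of x t] by simp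
    have "\<forall>s\<in>F. le s x" using t(2) to_trans[OF assms(1) _ xt] by simp
    then have "\<forall>s\<in>insert x F. le s x" using to_refl[OF assms(1), of x] by simp
    then show ?thesis by blast
  qed
qed

lemma LT_spec:
  fixes f :: "('v pp, 'a::zero) poly_mapping"
  assumes "term_order le" "f \<noteq> 0"
  shows "LT le f \<in> Poly_Mapping.keys f" "\<forall>s\<in>Poly_Mapping.keys f. le s (LT le f)"
proof -
  have ne: "Poly_Mapping.keys f \<noteq> {}" using assms(2)
    by (metis in_keys_iff lookup_zero poly_mapping_eqI empty_iff)
  obtain t where t: "t \<in> Poly_Mapping.keys f" "\<forall>s\<in>Poly_Mapping.keys f. le s t"
    using finite_max_exists[OF assms(1) finite_keys ne] by blast
  have "LT le f = t" unfolding LT_def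
  proof (rule the_equality)
    show "t \<in> Poly_Mapping.keys f \<and> (\<forall>s\<in>Poly_Mapping.keys f. le s t)" using t by blast
  next
    fix x assume x: "x \<in> Poly_Mapping.keys f \<and> (\<forall>s\<in>Poly_Mapping.keys f. le s x)"
    then have "le x t" "le t x" using t by auto
    then show "x = t" by (rule to_antisym[OF assms(1)])
  qed
  then show "LT le f \<in> Poly_Mapping.keys f" "\<forall>s\<in>Poly_Mapping.keys f. le s (LT le f)" using t by auto
qed

lemma LT_eqI:
  fixes f :: "('v pp, 'a::zero) poly_mapping"
  assumes "term_order le" "t \<in> Poly_Mapping.keys f" "\<forall>s\<in>Poly_Mapping.keys f. le s t"
  shows "LT le f = t"
proof -
  have "f \<noteq> 0" using assms(2) by auto
  from LT_spec[OF assms(1) this] assms have "le (LT le f) t" "le t (LT le f)" by auto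
  then show ?thesis by (rule to_antisym[OF assms(1)])
qed

lemma le_LT:
  fixes f :: "('v pp, 'a::zero) poly_mapping"
  assumes "term_order le" "s \<in> Poly_Mapping.keys f" shows "le s (LT le f)"
proof -
  have "f \<noteq> 0" using assms(2) by auto
  from LT_spec[OF assms(1) this] assms show ?thesis by blast
qed

lemma LC_nz:
  fixes f :: "('v pp, 'a::zero) poly_mapping"
  assumes "term_order le" "f \<noteq> 0" shows "LC le f \<noteq> 0"
proof -
  have "LT le f \<in> Poly_Mapping.keys f" using LT_spec[OF assms] by blast
  then show ?thesis unfolding LC_def in_keys_iff .
qed

lemma LT_in_keys:
  fixes f :: "('v pp, 'a::zero) poly_mapping"
  assumes "term_order le" "f \<noteq> 0" shows "LT le f \<in> Poly_Mapping.keys f"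
  by (rule LT_spec(1)[OF assms])

lemma lookup_single_mult:
  fixes p :: "('v pp, 'a::comm_ring_1) poly_mapping"
  shows "Poly_Mapping.lookup (Poly_Mapping.single u c * p) (u + k) = c * Poly_Mapping.lookup p k"
  by (simp add: lookup_mult lookup_single when_mult)

lemma keys_single_mult:
  fixes p :: "('v pp, 'a::comm_ring_1) poly_mapping"
  shows "Poly_Mapping.keys (Poly_Mapping.single u c * p) \<subseteq> (+) u ` Poly_Mapping.keys p"
  using keys_mult[of "Poly_Mapping.single u c" p] by (auto split: if_splits)

lemma lookup_single0_mult:
  fixes p :: "('v pp, 'a::comm_ring_1) poly_mapping"
  shows "Poly_Mapping.lookup (Poly_Mapping.single 0 c * p) k = c * Poly_Mapping.lookup p k"
  using lookup_single_mult[of 0 c p k] by simp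

lemma le_single_mult:
  fixes p :: "('v pp, 'a::comm_ring_1) poly_mapping"
  assumes "term_order le" "s \<in> Poly_Mapping.keys (Poly_Mapping.single u c * p)"
  shows "le s (u + LT le p)"
proof -
  obtain k where k: "k \<in> Poly_Mapping.keys p" "s = u + k" using keys_single_mult assms(2) by blast
  show ?thesis using k le_LT[OF assms(1) k(1)] to_mono_left[OF assms(1)] by blast
qed

lemma single_mult_LT:
  fixes p :: "('v pp, 'a::comm_ring_1) poly_mapping"
  assumes "term_order le" "p \<noteq> 0" "c * LC le p \<noteq> 0"
  shows "LT le (Poly_Mapping.single u c * p) = u + LT le p"
    "LC le (Poly_Mapping.single u c * p) = c * LC le p"
proof -
  have "u + LT le p \<in> Poly_Mapping.keys (Poly_Mapping.single u c * p)"
    using assms(3) by (simp add: in_keys_iff lookup_single_mult LC_def)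
  then show *: "LT le (Poly_Mapping.single u c * p) = u + LT le p"
    using LT_eqI[OF assms(1)] le_single_mult[OF assms(1)] by blast
  show "LC le (Poly_Mapping.single u c * p) = c * LC le p"
    unfolding LC_def * by (simp add: lookup_single_mult)
qed

lemma reduce_step:
  fixes f p :: "('v pp, 'a::field) poly_mapping"
  assumes "term_order le" "f \<noteq> 0" "p \<noteq> 0" "LT le f = u + LT le p"
  shows "\<forall>s\<in>Poly_Mapping.keys (f - Poly_Mapping.single u (LC le f / LC le p) * p).
           le s (LT le f) \<and> s \<noteq> LT le f"
proof
  fix s assume s: "s \<in> Poly_Mapping.keys (f - Poly_Mapping.single u (LC le f / LC le p) * p)"
  have "le s (LT le f)"
  proof (cases "s \<in> Poly_Mapping.keys f")
    case True then show ?thesis by (rule le_LT[OF assms(1)])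
  next
    case False then have "s \<in> Poly_Mapping.keys (Poly_Mapping.single u (LC le f / LC le p) * p)"
      using s keys_diff[of f "Poly_Mapping.single u (LC le f / LC le p) * p"] by blast
    from le_single_mult[OF assms(1) this] show ?thesis unfolding assms(4) .
  qed
  moreover have "s \<noteq> LT le f"
  proof
    assume "s = LT le f"
    have "Poly_Mapping.lookup (f - Poly_Mapping.single u (LC le f / LC le p) * p) s
       = LC le f - (LC le f / LC le p) * LC le p"
      unfolding \<open>s = LT le f\<close> lookup_minus
      by (simp only: assms(4) lookup_single_mult LC_def)
    also have "\<dots> = 0" using LC_nz[OF assms(1,3)] by simp
    finally have "Poly_Mapping.lookup (f - Poly_Mapping.single u (LC le f / LC le p) * p) s = 0" .
    then show False using s by (simp add: in_keys_iff)
  qed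
  ultimately show "le s (LT le f) \<and> s \<noteq> LT le f" by blast
qed

lemma LM_dvd_D:
  fixes a b :: "('v pp, 'a::comm_ring_1) poly_mapping"
  assumes "term_order le" "b \<noteq> 0" "LM le a dvd LM le b"
  shows "pp_dvd (LT le a) (LT le b) \<and> LC le a dvd LC le b"
proof -
  obtain q where q: "LM le b = LM le a * q" using assms(3) by (auto elim: dvdE)
  have nz: "LC le b \<noteq> 0" using LC_nz[OF assms(1,2)] .
  have "LT le b \<in> Poly_Mapping.keys (LM le b)" using nz by (simp add: LM_def)
  then have "LT le b \<in> Poly_Mapping.keys (LM le a * q)" unfolding q .
  then have "LT le b \<in> Poly_Mapping.keys (Poly_Mapping.single (LT le a) (LC le a) * q)"
    unfolding LM_def .
  then obtain k where k: "LT le b = LT le a + k" using keys_single_mult by blast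
  have "LC le b = Poly_Mapping.lookup (LM le b) (LT le b)" by (simp add: LM_def)
  also have "\<dots> = LC le a * Poly_Mapping.lookup q k" using q k by (simp add: LM_def lookup_single_mult)
  finally show ?thesis using k by (auto simp: pp_dvd_def)
qed

lemma LM_dvd_I:
  fixes a b :: "('v pp, 'a::comm_ring_1) poly_mapping"
  assumes "pp_dvd (LT le a) (LT le b)" "LC le a dvd LC le b"
  shows "LM le a dvd LM le b"
proof -
  obtain u where u: "LT le b = LT le a + u" using assms(1) by (auto simp: pp_dvd_def)
  obtain d where d: "LC le b = LC le a * d" using assms(2) by (auto elim: dvdE)
  have "LM le b = LM le a * Poly_Mapping.single u d" by (simp add: LM_def u d mult_single)
  then show ?thesis by simp
qed




section \<open>Well-foundedness (Dickson)\<close>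

lemma nat_seq_mono_sub:
  fixes a :: "nat \<Rightarrow> nat"
  shows "\<exists>\<tau>::nat\<Rightarrow>nat. strict_mono \<tau> \<and> (\<forall>m n. m \<le> n \<longrightarrow> a (\<tau> m) \<le> a (\<tau> n))"
proof -
  obtain f where f: "strict_mono f" "monoseq (\<lambda>n. a (f n))" using seq_monosub by blast
  have md: "(\<forall>m n. m \<le> n \<longrightarrow> a (f m) \<le> a (f n)) \<or> (\<forall>m n. m \<le> n \<longrightarrow> a (f n) \<le> a (f m))"
    using f(2) unfolding monoseq_def .
  show ?thesis
  proof (cases "\<forall>m n. m \<le> n \<longrightarrow> a (f m) \<le> a (f n)")
    case True
    then have "strict_mono f \<and> (\<forall>m n. m \<le> n \<longrightarrow> a (f m) \<le> a (f n))" using f(1) by simp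
    then show ?thesis by (rule exI[where x=f])
  next
    case False
    with md have dec: "\<forall>m n. m \<le> n \<longrightarrow> a (f n) \<le> a (f m)" by simp
    define v where "v = (LEAST x. \<exists>n. a (f n) = x)"
    have ex: "\<exists>x n. a (f n) = x" by blast
    have "\<exists>n. a (f n) = v" unfolding v_def by (rule LeastI_ex[OF ex])
    then obtain N where N: "a (f N) = v" by (elim exE)
    have const: "a (f n) = v" if "n \<ge> N" for n
    proof -
      have "a (f n) \<le> a (f N)" using dec that by simp
      then have "a (f n) \<le> v" using N by simp
      moreover have "v \<le> a (f n)" unfolding v_def by (rule Least_le) (rule exI[of _ n], rule refl)
      ultimately show ?thesis by simp
    qed
    have "strict_mono (\<lambda>n. f (n + N))" using f(1) unfolding strict_mono_def by simp
    moreover have "\<forall>m n. m \<le> n \<longrightarrow> a (f (m + N)) \<le> a (f (n + N))" using const by simp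
    ultimately show ?thesis by (intro exI[of _ "\<lambda>n. f (n + N)"] conjI)
  qed
qed

lemma dickson_aux:
  fixes f :: "nat \<Rightarrow> ('v \<Rightarrow>\<^sub>0 nat)"
  assumes "finite V"
  shows "\<exists>\<tau>::nat\<Rightarrow>nat. strict_mono \<tau> \<and> (\<forall>v\<in>V. \<forall>m n. m \<le> n \<longrightarrow>
            Poly_Mapping.lookup (f (\<tau> m)) v \<le> Poly_Mapping.lookup (f (\<tau> n)) v)"
  using assms
proof (induction V rule: finite_induct)
  case empty show ?case by (rule exI[of _ id]) (simp add: strict_mono_def)
next
  case (insert v V)
  from insert.IH obtain \<sigma> :: "nat \<Rightarrow> nat" where \<sigma>: "strict_mono \<sigma>"
    "\<forall>w\<in>V. \<forall>m n. m \<le> n \<longrightarrow> Poly_Mapping.lookup (f (\<sigma> m)) w \<le> Poly_Mapping.lookup (f (\<sigma> n)) w"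
    by (elim exE conjE)
  from nat_seq_mono_sub[of "\<lambda>n. Poly_Mapping.lookup (f (\<sigma> n)) v"]
  obtain \<tau> :: "nat \<Rightarrow> nat" where \<tau>: "strict_mono \<tau>"
    "\<forall>m n. m \<le> n \<longrightarrow> Poly_Mapping.lookup (f (\<sigma> (\<tau> m))) v \<le> Poly_Mapping.lookup (f (\<sigma> (\<tau> n))) v"
    by (elim exE conjE)
  have sm: "strict_mono (\<sigma> \<circ> \<tau>)" using strict_mono_o[OF \<sigma>(1) \<tau>(1)] .
  have "\<forall>w\<in>insert v V. \<forall>m n. m \<le> n \<longrightarrow>
      Poly_Mapping.lookup (f ((\<sigma> \<circ> \<tau>) m)) w \<le> Poly_Mapping.lookup (f ((\<sigma> \<circ> \<tau>) n)) w"
  proof (intro ballI allI impI)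
    fix w m n assume w: "w \<in> insert v V" and mn: "(m::nat) \<le> n"
    show "Poly_Mapping.lookup (f ((\<sigma> \<circ> \<tau>) m)) w \<le> Poly_Mapping.lookup (f ((\<sigma> \<circ> \<tau>) n)) w"
    proof (cases "w = v")
      case True then show ?thesis using \<tau>(2) mn by simp
    next
      case False
      then have "w \<in> V" using w by simp
      moreover have "\<tau> m \<le> \<tau> n" using mn \<tau>(1) by (simp add: strict_mono_less_eq)
      ultimately show ?thesis using \<sigma>(2) by simp
    qed
  qed
  with sm show ?case by (intro exI[where x="\<sigma> \<circ> \<tau>"] conjI)
qed

lemma dickson:
  fixes f :: "nat \<Rightarrow> (('v::finite) \<Rightarrow>\<^sub>0 nat)"
  shows "\<exists>i j. i < j \<and> pp_dvd (f i) (f j)"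
proof -
  obtain \<tau> :: "nat \<Rightarrow> nat" where \<tau>: "strict_mono \<tau>" "\<forall>v\<in>UNIV. \<forall>m n. m \<le> n \<longrightarrow>
            Poly_Mapping.lookup (f (\<tau> m)) v \<le> Poly_Mapping.lookup (f (\<tau> n)) v"
    using dickson_aux[OF finite_UNIV, of f] by (elim exE conjE) simp
  have le: "Poly_Mapping.lookup (f (\<tau> 0)) v \<le> Poly_Mapping.lookup (f (\<tau> (Suc 0))) v" for v
    using \<tau>(2) by simp
  have "f (\<tau> (Suc 0)) = f (\<tau> 0) + (f (\<tau> (Suc 0)) - f (\<tau> 0))"
  proof (rule poly_mapping_eqI)
    fix k show "Poly_Mapping.lookup (f (\<tau> (Suc 0))) k = Poly_Mapping.lookup (f (\<tau> 0) + (f (\<tau> (Suc 0)) - f (\<tau> 0))) k"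
      using le[of k] by (simp add: lookup_add lookup_minus)
  qed
  moreover have "\<tau> 0 < \<tau> (Suc 0)" using \<tau>(1) by (simp add: strict_mono_def)
  ultimately show ?thesis unfolding pp_dvd_def by blast
qed

lemma wf_lt:
  fixes le :: "('v::finite) pp \<Rightarrow> 'v pp \<Rightarrow> bool"
  assumes to: "term_order le"
  shows "wf {(s,t). le s t \<and> s \<noteq> t}"
  unfolding wf_iff_no_infinite_down_chain
proof
  assume "\<exists>f. \<forall>i. (f (Suc i), f i) \<in> {(s,t). le s t \<and> s \<noteq> t}"
  then obtain f :: "nat \<Rightarrow> 'v pp" where f0: "\<forall>i. (f (Suc i), f i) \<in> {(s,t). le s t \<and> s \<noteq> t}"
    by (elim exE)
  have f: "le (f (Suc i)) (f i) \<and> f (Suc i) \<noteq> f i" for i using f0 by simp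
  have dec: "le (f (i + Suc k)) (f i) \<and> f (i + Suc k) \<noteq> f i" for i k
  proof (induction k)
    case 0 then show ?case using f[of i] by simp
  next
    case (Suc k)
    have a1: "le (f (i + Suc (Suc k))) (f (i + Suc k))" using f[of "i + Suc k"] by simp
    have a2: "f (i + Suc (Suc k)) \<noteq> f (i + Suc k)" using f[of "i + Suc k"] by simp
    have ih1: "le (f (i + Suc k)) (f i)" using Suc.IH by simp
    have ih2: "f (i + Suc k) \<noteq> f i" using Suc.IH by simp
    have b: "le (f (i + Suc (Suc k))) (f i)" by (rule to_trans[OF to a1 ih1])
    have "f (i + Suc (Suc k)) \<noteq> f i"
    proof
      assume e: "f (i + Suc (Suc k)) = f i"
      have "le (f i) (f (i + Suc k))" using a1 unfolding e .
      then have "f i = f (i + Suc k)" using ih1 by (rule to_antisym[OF to])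
      then show False using ih2 by simp
    qed
    then show ?case using b by simp
  qed
  obtain i j where ij: "i < j" "pp_dvd (f i) (f j)" using dickson[of f] by (elim exE conjE)
  obtain k where k: "j = i + Suc k" using ij(1) less_iff_Suc_add by auto
  have "le (f i) (f j)" by (rule to_dvd[OF to ij(2)])
  moreover have "le (f j) (f i)" "f j \<noteq> f i" using dec[of i k] unfolding k by simp_all
  ultimately show False using to_antisym[OF to, of "f j" "f i"] by simp
qed

lemma ideal_gen_sub: "f \<in> F \<Longrightarrow> f \<in> ideal_gen F"
  unfolding ideal_gen_def
  by (rule CollectI, rule exI[of _ "{f}"], rule exI[of _ "\<lambda>_. 1"]) simp

lemma ideal_gen_ideal: "is_ideal (ideal_gen (F::'a::comm_ring_1 set))"
  unfolding is_ideal_def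
proof (intro conjI ballI allI)
  show "0 \<in> ideal_gen F" unfolding ideal_gen_def
    by (rule CollectI, rule exI[of _ "{}"]) simp
next
  fix a b assume a: "a \<in> ideal_gen F" and b: "b \<in> ideal_gen F"
  obtain S1 c1 where 1: "finite S1" "S1 \<subseteq> F" "a = (\<Sum>f\<in>S1. c1 f * f)" using a unfolding ideal_gen_def by blast
  obtain S2 c2 where 2: "finite S2" "S2 \<subseteq> F" "b = (\<Sum>f\<in>S2. c2 f * f)" using b unfolding ideal_gen_def by blast
  define c where "c = (\<lambda>f. (if f \<in> S1 then c1 f else 0) + (if f \<in> S2 then c2 f else 0))"
  have "(\<Sum>f\<in>S1 \<union> S2. c f * f) = (\<Sum>f\<in>S1 \<union> S2. (if f \<in> S1 then c1 f * f else 0))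
      + (\<Sum>f\<in>S1 \<union> S2. (if f \<in> S2 then c2 f * f else 0))"
  proof -
    have "c f * f = (if f \<in> S1 then c1 f * f else 0) + (if f \<in> S2 then c2 f * f else 0)" for f
      unfolding c_def by (simp add: distrib_right)
    then show ?thesis by (simp add: sum.distrib)
  qed
  also have "\<dots> = a + b"
  proof -
    have fu: "finite (S1 \<union> S2)" using 1(1) 2(1) by simp
    have "(\<Sum>f\<in>S1 \<union> S2. (if f \<in> S1 then c1 f * f else 0)) = (\<Sum>f\<in>(S1 \<union> S2) \<inter> S1. c1 f * f)"
      using sum.inter_restrict[OF fu, of "\<lambda>f. c1 f * f" S1] by simp
    moreover have "(\<Sum>f\<in>S1 \<union> S2. (if f \<in> S2 then c2 f * f else 0)) = (\<Sum>f\<in>(S1 \<union> S2) \<inter> S2. c2 f * f)"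
      using sum.inter_restrict[OF fu, of "\<lambda>f. c2 f * f" S2] by simp
    moreover have "(S1 \<union> S2) \<inter> S1 = S1" "(S1 \<union> S2) \<inter> S2 = S2" by auto
    ultimately show ?thesis using 1(3) 2(3) by simp
  qed
  finally have e: "a + b = (\<Sum>f\<in>S1 \<union> S2. c f * f)" by simp
  have "finite (S1 \<union> S2)" "S1 \<union> S2 \<subseteq> F" using 1 2 by auto
  with e show "a + b \<in> ideal_gen F" unfolding ideal_gen_def by (intro CollectI exI[where x="S1 \<union> S2"] exI[where x=c] conjI)
next
  fix a c assume a: "a \<in> ideal_gen F"
  obtain S1 c1 where 1: "finite S1" "S1 \<subseteq> F" "a = (\<Sum>f\<in>S1. c1 f * f)" using a unfolding ideal_gen_def by blast
  have "c * a = (\<Sum>f\<in>S1. (c * c1 f) * f)" using 1 by (simp add: sum_distrib_left mult.assoc)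
  with 1 show "c * a \<in> ideal_gen F" unfolding ideal_gen_def
    by (intro CollectI exI[where x="S1"] exI[where x="\<lambda>f. c * c1 f"] conjI)
qed

lemma ideal_add: "is_ideal K \<Longrightarrow> a \<in> K \<Longrightarrow> b \<in> K \<Longrightarrow> a + b \<in> K"
  unfolding is_ideal_def by blast
lemma ideal_mult: "is_ideal K \<Longrightarrow> a \<in> K \<Longrightarrow> c * a \<in> K"
  unfolding is_ideal_def by blast
lemma ideal_zero: "is_ideal K \<Longrightarrow> 0 \<in> K"
  unfolding is_ideal_def by blast
lemma ideal_diff:
  fixes K :: "'a::comm_ring_1 set"
  assumes "is_ideal K" "a \<in> K" "b \<in> K" shows "a - b \<in> K"
proof -
  have "(-1) * b \<in> K" by (rule ideal_mult[OF assms(1,3)])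
  from ideal_add[OF assms(1,2) this] show ?thesis by simp
qed

lemma ideal_gen_least:
  fixes K :: "'a::comm_ring_1 set"
  assumes K: "is_ideal K" and FK: "F \<subseteq> K"
  shows "ideal_gen F \<subseteq> K"
proof
  fix x assume "x \<in> ideal_gen F"
  then obtain S c where S: "finite S" "S \<subseteq> F" "x = (\<Sum>f\<in>S. c f * f)" unfolding ideal_gen_def by blast
  have "(\<Sum>f\<in>S. c f * f) \<in> K" using S(1,2)
  proof (induction S rule: finite_induct)
    case empty then show ?case using ideal_zero[OF K] by simp
  next
    case (insert y S)
    have "c y * y \<in> K" using insert.prems FK ideal_mult[OF K] by blast
    moreover have "(\<Sum>f\<in>S. c f * f) \<in> K" using insert by blast
    ultimately show ?case using insert.hyps ideal_add[OF K] by simp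
  qed
  then show "x \<in> K" using S by simp
qed




lemma lookup_to_rat: "Poly_Mapping.lookup (to_rat_poly f) t = rat_of_int (Poly_Mapping.lookup f t)"
  unfolding to_rat_poly_def by (simp add: map.rep_eq when_def)

lemma keys_to_rat: "Poly_Mapping.keys (to_rat_poly f) = Poly_Mapping.keys f"
  by (auto simp: in_keys_iff lookup_to_rat)

lemma to_rat_eq_iff: "to_rat_poly f = to_rat_poly g \<longleftrightarrow> f = g"
  by (auto simp: poly_mapping_eq_iff fun_eq_iff lookup_to_rat)

lemma to_rat_zero [simp]: "to_rat_poly 0 = 0"
  by (rule poly_mapping_eqI) (simp add: lookup_to_rat)

lemma to_rat_eq0_iff: "to_rat_poly f = 0 \<longleftrightarrow> f = 0"
  using to_rat_eq_iff[of f 0] by simp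

lemma to_rat_add: "to_rat_poly (f + g) = to_rat_poly f + to_rat_poly g"
  by (rule poly_mapping_eqI) (simp add: lookup_to_rat lookup_add)

lemma of_int_Sum_any: "rat_of_int (Sum_any g) = Sum_any (\<lambda>x. rat_of_int (g x))"
proof -
  have "{x. rat_of_int (g x) \<noteq> 0} = {x. g x \<noteq> 0}" by simp
  then show ?thesis unfolding Sum_any.expand_set by (simp add: of_int_sum)
qed

lemma of_int_when: "rat_of_int (a when P) = (rat_of_int a when P)"
  by (cases P) simp_all

lemma to_rat_mult: "to_rat_poly (f * g) = to_rat_poly f * to_rat_poly g"
  by (rule poly_mapping_eqI) (simp add: lookup_to_rat lookup_mult of_int_Sum_any of_int_when)

lemma LT_to_rat: "LT le (to_rat_poly f) = LT le f"
  unfolding LT_def keys_to_rat ..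

lemma LC_to_rat: "LC le (to_rat_poly f) = rat_of_int (LC le f)"
  unfolding LC_def LT_to_rat lookup_to_rat ..

section \<open>Denominators and primitive parts\<close>

lemma den_dvd:
  "t \<in> Poly_Mapping.keys f \<Longrightarrow> snd (quotient_of (Poly_Mapping.lookup f t)) dvd den f"
  unfolding den_def by (rule dvd_Lcm_int) blast

lemma den_nz: "den f \<noteq> 0"
proof -
  have "finite ((\<lambda>t. snd (quotient_of (Poly_Mapping.lookup f t))) ` Poly_Mapping.keys f)" by simp
  moreover have "0 \<notin> (\<lambda>t. snd (quotient_of (Poly_Mapping.lookup f t))) ` Poly_Mapping.keys f"
  proof
    assume "0 \<in> (\<lambda>t. snd (quotient_of (Poly_Mapping.lookup f t))) ` Poly_Mapping.keys f"
    then obtain t where "0 = snd (quotient_of (Poly_Mapping.lookup f t))" by blast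
    then show False using quotient_of_denom_pos'[of "Poly_Mapping.lookup f t"] by simp
  qed
  ultimately show ?thesis unfolding den_def using Lcm_0_iff by blast
qed

lemma den_int:
  "\<exists>n. Poly_Mapping.lookup f t * rat_of_int (den f) = rat_of_int n"
proof (cases "t \<in> Poly_Mapping.keys f")
  case True
  obtain a b where ab: "quotient_of (Poly_Mapping.lookup f t) = (a, b)" by (cases "quotient_of (Poly_Mapping.lookup f t)")
  have q: "Poly_Mapping.lookup f t = rat_of_int a / rat_of_int b" by (rule quotient_of_div[OF ab])
  have b0: "b > 0" by (rule quotient_of_denom_pos[OF ab])
  have "b dvd den f" using den_dvd[OF True] ab by simp
  then obtain m where m: "den f = b * m" by (elim dvdE)
  have "Poly_Mapping.lookup f t * rat_of_int (den f) = rat_of_int (a * m)"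
    using b0 by (simp add: q m field_simps)
  then show ?thesis by blast
next
  case False
  then have "Poly_Mapping.lookup f t = 0" by (simp add: in_keys_iff)
  then show ?thesis by (intro exI[of _ 0]) simp
qed

lemma to_rat_prim:
  assumes "f \<noteq> 0"
  shows "\<exists>s. s \<noteq> 0 \<and> to_rat_poly (prim f) = Poly_Mapping.single 0 s * f"
proof -
  define d where "d = den f"
  define h where "h = Poly_Mapping.map (\<lambda>q. fst (quotient_of (q * rat_of_int d))) f"
  define c where "c = Gcd ((\<lambda>t. Poly_Mapping.lookup h t) ` Poly_Mapping.keys h)"
  have pf: "prim f = Poly_Mapping.map (\<lambda>a. a div c) h"
    unfolding prim_def Let_def d_def h_def c_def ..
  have d0: "d \<noteq> 0" unfolding d_def by (rule den_nz)
  have hl: "rat_of_int (Poly_Mapping.lookup h t) = Poly_Mapping.lookup f t * rat_of_int d" for t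
  proof -
    obtain n where n: "Poly_Mapping.lookup f t * rat_of_int d = rat_of_int n"
      using den_int[of f t] unfolding d_def by (elim exE)
    show ?thesis
    proof (cases "Poly_Mapping.lookup f t = 0")
      case True then show ?thesis unfolding h_def by (simp add: map.rep_eq)
    next
      case False then show ?thesis unfolding h_def by (simp add: map.rep_eq n)
    qed
  qed
  have cd: "c dvd Poly_Mapping.lookup h t" for t
  proof (cases "t \<in> Poly_Mapping.keys h")
    case True then show ?thesis unfolding c_def by (intro Gcd_dvd) blast
  next
    case False then show ?thesis by (simp add: in_keys_iff)
  qed
  have "Poly_Mapping.keys f \<noteq> {}" using assms by simp
  then obtain t0 where t0: "t0 \<in> Poly_Mapping.keys f" by blast
  have "rat_of_int (Poly_Mapping.lookup h t0) \<noteq> 0" using t0 d0 by (simp add: hl in_keys_iff)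
  then have h0: "Poly_Mapping.lookup h t0 \<noteq> 0" by simp
  then have "t0 \<in> Poly_Mapping.keys h" by (simp add: in_keys_iff)
  then have "Poly_Mapping.lookup h t0 \<in> (\<lambda>t. Poly_Mapping.lookup h t) ` Poly_Mapping.keys h" by (rule imageI)
  then have c0: "c \<noteq> 0" unfolding c_def Gcd_0_iff using h0 by blast
  define s where "s = rat_of_int d / rat_of_int c"
  have "to_rat_poly (prim f) = Poly_Mapping.single 0 s * f"
  proof (rule poly_mapping_eqI)
    fix t
    have "Poly_Mapping.lookup (to_rat_poly (prim f)) t = rat_of_int (Poly_Mapping.lookup h t div c)"
      unfolding lookup_to_rat pf by (simp add: map.rep_eq when_def)
    also have "\<dots> = rat_of_int (Poly_Mapping.lookup h t) / rat_of_int c" by (rule of_int_div[OF cd])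
    also have "\<dots> = s * Poly_Mapping.lookup f t" unfolding hl s_def by simp
    also have "\<dots> = Poly_Mapping.lookup (Poly_Mapping.single 0 s * f) t" by (simp add: lookup_single0_mult)
    finally show "Poly_Mapping.lookup (to_rat_poly (prim f)) t = Poly_Mapping.lookup (Poly_Mapping.single 0 s * f) t" .
  qed
  moreover have "s \<noteq> 0" unfolding s_def using d0 c0 by simp
  ultimately show ?thesis by (intro exI[of _ s] conjI)
qed

lemma keys_prim:
  assumes "f \<noteq> 0"
  shows "Poly_Mapping.keys (prim f) = Poly_Mapping.keys f"
proof -
  obtain s where s: "s \<noteq> 0" "to_rat_poly (prim f) = Poly_Mapping.single 0 s * f"
    using to_rat_prim[OF assms] by blast
  have "Poly_Mapping.keys (prim f) = Poly_Mapping.keys (to_rat_poly (prim f))" by (simp add: keys_to_rat)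
  also have "\<dots> = Poly_Mapping.keys f" unfolding s(2) using s(1)
    by (auto simp: in_keys_iff lookup_single0_mult)
  finally show ?thesis .
qed

section \<open>p-integral rationals\<close>

definition zp :: "int \<Rightarrow> rat \<Rightarrow> bool" where
  "zp p q \<longleftrightarrow> \<not> p dvd snd (quotient_of q)"

lemma zp_iff:
  assumes "prime p"
  shows "zp p q \<longleftrightarrow> (\<exists>a b. b \<noteq> 0 \<and> \<not> p dvd b \<and> q = rat_of_int a / rat_of_int b)"
proof
  assume "zp p q"
  obtain a b where ab: "quotient_of q = (a, b)" by (cases "quotient_of q")
  have "q = rat_of_int a / rat_of_int b" by (rule quotient_of_div[OF ab])
  moreover have "b > 0" by (rule quotient_of_denom_pos[OF ab])
  moreover have "\<not> p dvd b" using \<open>zp p q\<close> ab unfolding zp_def by simp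
  ultimately show "\<exists>a b. b \<noteq> 0 \<and> \<not> p dvd b \<and> q = rat_of_int a / rat_of_int b" by (intro exI conjI) auto
next
  assume "\<exists>a b. b \<noteq> 0 \<and> \<not> p dvd b \<and> q = rat_of_int a / rat_of_int b"
  then obtain a b where ab: "b \<noteq> 0" "\<not> p dvd b" "q = rat_of_int a / rat_of_int b" by blast
  obtain n d where nd: "quotient_of q = (n, d)" by (cases "quotient_of q")
  have q: "q = rat_of_int n / rat_of_int d" by (rule quotient_of_div[OF nd])
  have d0: "d > 0" by (rule quotient_of_denom_pos[OF nd])
  have cop: "coprime d n" using quotient_of_coprime[OF nd] by (simp add: coprime_commute)
  have "rat_of_int a / rat_of_int b = rat_of_int n / rat_of_int d" using ab(3) q by simp
  then have "rat_of_int (a * d) = rat_of_int (n * b)" using ab(1) d0 by (simp add: field_simps)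
  then have "a * d = n * b" by (simp only: of_int_eq_iff)
  then have "d dvd n * b" by (metis dvd_triv_right)
  then have "d dvd b" using coprime_dvd_mult_right_iff[OF cop] by simp
  then have "\<not> p dvd d" using ab(2) dvd_trans by blast
  then show "zp p q" unfolding zp_def nd by simp
qed

lemma zp_int: "prime p \<Longrightarrow> zp p (rat_of_int a)"
  unfolding zp_def using prime_ge_2_int[of p] zdvd_imp_le[of p 1] by auto

lemma zp_0: "prime p \<Longrightarrow> zp p 0"
  using zp_int[of p 0] by simp

lemma zp_add:
  assumes "prime p" "zp p x" "zp p y" shows "zp p (x + y)"
proof -
  obtain a b where 1: "b \<noteq> 0" "\<not> p dvd b" "x = rat_of_int a / rat_of_int b" using assms(1,2) zp_iff by blast
  obtain a' b' where 2: "b' \<noteq> 0" "\<not> p dvd b'" "y = rat_of_int a' / rat_of_int b'" using assms(1,3) zp_iff by blast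
  have "x + y = rat_of_int (a * b' + a' * b) / rat_of_int (b * b')" unfolding 1(3) 2(3) using 1(1) 2(1) by (simp add: field_simps)
  moreover have "b * b' \<noteq> 0" "\<not> p dvd b * b'" using 1 2 assms(1) by (auto simp: prime_dvd_mult_iff)
  ultimately show ?thesis using zp_iff[OF assms(1)] by blast
qed

lemma zp_mult:
  assumes "prime p" "zp p x" "zp p y" shows "zp p (x * y)"
proof -
  obtain a b where 1: "b \<noteq> 0" "\<not> p dvd b" "x = rat_of_int a / rat_of_int b" using assms(1,2) zp_iff by blast
  obtain a' b' where 2: "b' \<noteq> 0" "\<not> p dvd b'" "y = rat_of_int a' / rat_of_int b'" using assms(1,3) zp_iff by blast
  have "x * y = rat_of_int (a * a') / rat_of_int (b * b')" unfolding 1(3) 2(3) by simp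
  moreover have "b * b' \<noteq> 0" "\<not> p dvd b * b'" using 1 2 assms(1) by (auto simp: prime_dvd_mult_iff)
  ultimately show ?thesis using zp_iff[OF assms(1)] by blast
qed

lemma zp_uminus:
  assumes "prime p" "zp p x" shows "zp p (- x)"
  using zp_mult[OF assms(1) zp_int[OF assms(1), of "-1"] assms(2)] by simp

lemma zp_diff:
  assumes "prime p" "zp p x" "zp p y" shows "zp p (x - y)"
  using zp_add[OF assms(1,2) zp_uminus[OF assms(1,3)]] by simp

lemma zp_div:
  assumes "prime p" "zp p x" "\<not> p dvd c" shows "zp p (x / rat_of_int c)"
proof -
  obtain a b where 1: "b \<noteq> 0" "\<not> p dvd b" "x = rat_of_int a / rat_of_int b" using assms(1,2) zp_iff by blast
  have c0: "c \<noteq> 0" using assms(3) by auto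
  have "x / rat_of_int c = rat_of_int a / rat_of_int (b * c)" unfolding 1(3) by simp
  moreover have "b * c \<noteq> 0" "\<not> p dvd b * c" using 1 c0 assms(1,3) by (auto simp: prime_dvd_mult_iff)
  ultimately show ?thesis using zp_iff[OF assms(1)] by blast
qed

definition zpp :: "int \<Rightarrow> ('v pp, rat) poly_mapping \<Rightarrow> bool" where
  "zpp p f \<longleftrightarrow> (\<forall>t. zp p (Poly_Mapping.lookup f t))"

lemma zpp_add: "prime p \<Longrightarrow> zpp p f \<Longrightarrow> zpp p g \<Longrightarrow> zpp p (f + g)"
  unfolding zpp_def by (simp add: lookup_add zp_add)

lemma zpp_diff: "prime p \<Longrightarrow> zpp p f \<Longrightarrow> zpp p g \<Longrightarrow> zpp p (f - g)"
  unfolding zpp_def by (simp add: lookup_minus zp_diff)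

lemma zpp_single: "prime p \<Longrightarrow> zp p c \<Longrightarrow> zpp p (Poly_Mapping.single u c)"
  unfolding zpp_def by (simp add: lookup_single when_def zp_0)

lemma zpp_single_mult:
  assumes "prime p" "zp p c" "zpp p g"
  shows "zpp p (Poly_Mapping.single u c * g)"
  unfolding zpp_def
proof
  fix s
  show "zp p (Poly_Mapping.lookup (Poly_Mapping.single u c * g) s)"
  proof (cases "s \<in> Poly_Mapping.keys (Poly_Mapping.single u c * g)")
    case True
    then obtain k where k: "s = u + k" using keys_single_mult by blast
    show ?thesis unfolding k lookup_single_mult using zp_mult[OF assms(1,2)] assms(3) unfolding zpp_def by blast
  next
    case False then show ?thesis by (simp add: in_keys_iff zp_0 assms(1))
  qed
qed

lemma zpp_to_rat: "prime p \<Longrightarrow> zpp p (to_rat_poly f)"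
  unfolding zpp_def by (simp add: lookup_to_rat zp_int)

lemma den_zpp:
  assumes "prime p" "\<not> p dvd den g" shows "zpp p g"
  unfolding zpp_def
proof
  fix t
  show "zp p (Poly_Mapping.lookup g t)"
  proof (cases "t \<in> Poly_Mapping.keys g")
    case True
    then show ?thesis unfolding zp_def using den_dvd[OF True] assms(2) dvd_trans by blast
  next
    case False then show ?thesis by (simp add: in_keys_iff zp_0 assms(1))
  qed
qed

lemma prime_not_dvd_Lcm:
  fixes p :: int
  assumes "prime p" "finite A" "\<forall>a\<in>A. \<not> p dvd a"
  shows "\<not> p dvd Lcm A"
  using assms(2,3)
proof (induction A rule: finite_induct)
  case empty then show ?case using prime_ge_2_int[OF assms(1)] zdvd_imp_le[of p 1] by auto
next
  case (insert a A)
  show ?case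
  proof
    assume "p dvd Lcm (insert a A)"
    then have "p dvd lcm a (Lcm A)" by simp
    moreover have "lcm a (Lcm A) dvd a * Lcm A" by (rule lcm_least) simp_all
    ultimately have "p dvd a * Lcm A" by (rule dvd_trans)
    then have "p dvd a \<or> p dvd Lcm A" using assms(1) by (simp add: prime_dvd_mult_iff)
    then show False using insert by auto
  qed
qed

lemma zpp_den:
  assumes "prime p" "zpp p g" shows "\<not> p dvd den g"
  unfolding den_def
proof (rule prime_not_dvd_Lcm[OF assms(1)])
  show "\<forall>a\<in>(\<lambda>t. snd (quotient_of (Poly_Mapping.lookup g t))) ` Poly_Mapping.keys g. \<not> p dvd a"
    using assms(2) unfolding zpp_def zp_def by blast
qed simp




locale thm37 =
  fixes le :: "('v::finite) pp \<Rightarrow> 'v pp \<Rightarrow> bool"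
    and I :: "('v, rat) mpoly set"
    and g :: "nat \<Rightarrow> ('v, rat) mpoly"
    and r :: nat
    and Gt :: "('v, int) mpoly set"
  assumes sigma: "term_order le"
    and I_ideal: "is_ideal I"
    and I_nonzero: "I \<noteq> {0}"
    and G_red: "is_reduced_GB le (g ` {1..r}) I"
    and G_sorted: "\<And>i j. 1 \<le> i \<Longrightarrow> i < j \<Longrightarrow> j \<le> r \<Longrightarrow>
                      LT le (g i) \<noteq> LT le (g j) \<and> le (LT le (g i)) (LT le (g j))"
    and Gt_min: "is_minimal_strong_GB le Gt (ideal_gen (prim ` g ` {1..r}))"
begin

lemma G_ideal: "ideal_gen (g ` {1..r}) = I"
  using G_red unfolding is_reduced_GB_def is_minimal_GB_def is_GB_def by (elim conjE)

lemma G_nz: "k \<in> {1..r} \<Longrightarrow> g k \<noteq> 0"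
proof
  assume "k \<in> {1..r}" "g k = 0"
  then have "0 \<in> g ` {1..r}" by (metis imageI)
  then show False using G_red unfolding is_reduced_GB_def is_minimal_GB_def is_GB_def by (elim conjE) simp
qed

lemma G_GB: "f \<in> I \<Longrightarrow> f \<noteq> 0 \<Longrightarrow> \<exists>k\<in>{1..r}. pp_dvd (LT le (g k)) (LT le f)"
proof -
  assume f: "f \<in> I" "f \<noteq> 0"
  have "\<forall>f\<in>I. f \<noteq> 0 \<longrightarrow> (\<exists>h\<in>g ` {1..r}. pp_dvd (LT le h) (LT le f))"
    using G_red unfolding is_reduced_GB_def is_minimal_GB_def is_GB_def by (elim conjE)
  then obtain h where "h \<in> g ` {1..r}" "pp_dvd (LT le h) (LT le f)" using f by blast
  then show ?thesis by blast
qed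

lemma G_LC: "k \<in> {1..r} \<Longrightarrow> LC le (g k) = 1"
proof -
  assume k: "k \<in> {1..r}"
  have "\<forall>h\<in>g ` {1..r}. LC le h = 1"
    using G_red unfolding is_reduced_GB_def by (elim conjE)
  then show ?thesis using k by simp
qed

lemma G_tail:
  assumes "k \<in> {1..r}" "t \<in> Poly_Mapping.keys (g k)" "t \<noteq> LT le (g k)" "j \<in> {1..r}"
  shows "\<not> pp_dvd (LT le (g j)) t"
proof -
  have "\<forall>h\<in>g ` {1..r}. \<forall>t\<in>Poly_Mapping.keys h. t \<noteq> LT le h \<longrightarrow> (\<forall>h'\<in>g ` {1..r}. \<not> pp_dvd (LT le h') t)"
    using G_red unfolding is_reduced_GB_def by (elim conjE)
  then show ?thesis using assms by simp
qed

lemma sorted_lt: "i \<in> {1..r} \<Longrightarrow> j \<in> {1..r} \<Longrightarrow> i < j \<Longrightarrow> LT le (g i) \<noteq> LT le (g j) \<and> le (LT le (g i)) (LT le (g j))"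
  using G_sorted by simp

lemma sorted_le: "i \<in> {1..r} \<Longrightarrow> j \<in> {1..r} \<Longrightarrow> i \<le> j \<Longrightarrow> le (LT le (g i)) (LT le (g j))"
  using sorted_lt[of i j] to_refl[OF sigma] by (cases "i = j") simp_all

lemma LT_inj: "i \<in> {1..r} \<Longrightarrow> j \<in> {1..r} \<Longrightarrow> LT le (g i) = LT le (g j) \<Longrightarrow> i = j"
  using sorted_lt[of i j] sorted_lt[of j i] by (cases i j rule: linorder_cases) auto

lemma G_min:
  assumes k: "k \<in> {1..r}" and k': "k' \<in> {1..r}" and d: "pp_dvd (LT le (g k')) (LT le (g k))"
  shows "k' = k"
proof (cases "g k' = g k")
  case True then show ?thesis using LT_inj[OF k' k] by simp
next
  case False
  have "\<forall>a\<in>g ` {1..r}. \<forall>b\<in>g ` {1..r}. a \<noteq> b \<longrightarrow> \<not> pp_dvd (LT le a) (LT le b)"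
    using G_red unfolding is_reduced_GB_def is_minimal_GB_def by (elim conjE)
  then have "\<not> pp_dvd (LT le (g k')) (LT le (g k))" using k k' False by simp
  then show ?thesis using d by simp
qed

lemma G_in_I: "k \<in> {1..r} \<Longrightarrow> g k \<in> I"
  using ideal_gen_sub[of "g k" "g ` {1..r}"] G_ideal by simp

abbreviation "J \<equiv> ideal_gen (prim ` g ` {1..r})"

lemma Gt_fin: "finite Gt"
  using Gt_min unfolding is_minimal_strong_GB_def is_strong_GB_def by (elim conjE)

lemma Gt_nz: "h \<in> Gt \<Longrightarrow> h \<noteq> 0"
  using Gt_min unfolding is_minimal_strong_GB_def is_strong_GB_def by (elim conjE) auto

lemma Gt_gen: "ideal_gen Gt = J"
  using Gt_min unfolding is_minimal_strong_GB_def is_strong_GB_def by (elim conjE)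

lemma Gt_strong: "f \<in> J \<Longrightarrow> f \<noteq> 0 \<Longrightarrow> \<exists>h\<in>Gt. LM le h dvd LM le f"
proof -
  assume f: "f \<in> J" "f \<noteq> 0"
  have "\<forall>f\<in>J. f \<noteq> 0 \<longrightarrow> (\<exists>h\<in>Gt. LM le h dvd LM le f)"
    using Gt_min unfolding is_minimal_strong_GB_def is_strong_GB_def by (elim conjE)
  then show ?thesis using f by simp
qed

lemma Gt_minimal: "h \<in> Gt \<Longrightarrow> h' \<in> Gt \<Longrightarrow> LM le h dvd LM le h' \<Longrightarrow> h = h'"
proof (rule ccontr)
  assume a: "h \<in> Gt" "h' \<in> Gt" "LM le h dvd LM le h'" "h \<noteq> h'"
  have "\<forall>a\<in>Gt. \<forall>b\<in>Gt. a \<noteq> b \<longrightarrow> \<not> LM le a dvd LM le b"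
    using Gt_min unfolding is_minimal_strong_GB_def by (elim conjE)
  then show False using a by simp
qed

lemma Gt_in_J: "h \<in> Gt \<Longrightarrow> h \<in> J"
  using ideal_gen_sub[of h Gt] Gt_gen by simp

lemma J_to_I: "f \<in> J \<Longrightarrow> to_rat_poly f \<in> I"
proof -
  assume f: "f \<in> J"
  let ?K = "{f. to_rat_poly f \<in> I}"
  have K: "is_ideal ?K" unfolding is_ideal_def
    using ideal_zero[OF I_ideal] ideal_add[OF I_ideal] ideal_mult[OF I_ideal]
    by (simp add: to_rat_add to_rat_mult)
  have "prim ` g ` {1..r} \<subseteq> ?K"
  proof
    fix x assume "x \<in> prim ` g ` {1..r}"
    then obtain k where k: "k \<in> {1..r}" "x = prim (g k)" by blast
    obtain s where s: "to_rat_poly (prim (g k)) = Poly_Mapping.single 0 s * g k"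
      using to_rat_prim[OF G_nz[OF k(1)]] by (elim exE conjE)
    show "x \<in> ?K" using ideal_mult[OF I_ideal G_in_I[OF k(1)]] k(2) s by simp
  qed
  from ideal_gen_least[OF K this] f show ?thesis by blast
qed

lemma J_ideal: "is_ideal J" by (rule ideal_gen_ideal)

lemma Gt_LT: "h \<in> Gt \<Longrightarrow> \<exists>k\<in>{1..r}. pp_dvd (LT le (g k)) (LT le h)"
proof -
  assume h: "h \<in> Gt"
  have "to_rat_poly h \<in> I" by (rule J_to_I[OF Gt_in_J[OF h]])
  moreover have "to_rat_poly h \<noteq> 0" using Gt_nz[OF h] by (simp add: to_rat_eq0_iff)
  ultimately have "\<exists>k\<in>{1..r}. pp_dvd (LT le (g k)) (LT le (to_rat_poly h))" by (rule G_GB)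
  then show ?thesis by (simp only: LT_to_rat)
qed

lemma Gt_LT_eq:
  assumes h: "h \<in> Gt" and k: "k \<in> {1..r}" and d: "pp_dvd (LT le h) (LT le (g k))"
  shows "LT le h = LT le (g k)"
proof -
  obtain k' where k': "k' \<in> {1..r}" "pp_dvd (LT le (g k')) (LT le h)" using Gt_LT[OF h] by blast
  have "k' = k" using G_min[OF k k'(1) pp_dvd_trans[OF k'(2) d]] .
  then show ?thesis using pp_dvd_antisym[OF sigma d] k'(2) by simp
qed

lemma LT_prim: "f \<noteq> 0 \<Longrightarrow> LT le (prim f) = LT le f"
  unfolding LT_def by (simp add: keys_prim)

lemma prim_nz: "f \<noteq> 0 \<Longrightarrow> prim f \<noteq> 0"
  using keys_prim[of f] by (metis keys_eq_empty)

lemma exists_gt: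
  assumes k: "k \<in> {1..r}"
  shows "\<exists>h. h \<in> Gt \<and> LT le h = LT le (g k) \<and> LC le h dvd LC le (prim (g k))"
proof -
  have inJ: "prim (g k) \<in> J" using k by (intro ideal_gen_sub) blast
  have nz: "prim (g k) \<noteq> 0" using prim_nz[OF G_nz[OF k]] .
  obtain h where h: "h \<in> Gt" "LM le h dvd LM le (prim (g k))" using Gt_strong[OF inJ nz] by blast
  have "pp_dvd (LT le h) (LT le (prim (g k))) \<and> LC le h dvd LC le (prim (g k))"
    by (rule LM_dvd_D[OF sigma nz h(2)])
  then have d: "pp_dvd (LT le h) (LT le (g k))" and c: "LC le h dvd LC le (prim (g k))"
    using LT_prim[OF G_nz[OF k]] by simp_all
  have "LT le h = LT le (g k)" by (rule Gt_LT_eq[OF h(1) k d])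
  then show ?thesis using h(1) c by blast
qed

lemma unique_gt:
  assumes h1: "h1 \<in> Gt" and h2: "h2 \<in> Gt" and k: "k \<in> {1..r}"
    and e1: "LT le h1 = LT le (g k)" and e2: "LT le h2 = LT le (g k)"
  shows "h1 = h2"
proof -
  define t0 where "t0 = LT le (g k)"
  define a where "a = LC le h1"
  define b where "b = LC le h2"
  have a0: "a \<noteq> 0" unfolding a_def by (rule LC_nz[OF sigma Gt_nz[OF h1]])
  obtain x y where xy: "x * a + y * b = gcd a b" using bezout_int by blast
  define F where "F = Poly_Mapping.single 0 x * h1 + Poly_Mapping.single 0 y * h2"
  have lF: "Poly_Mapping.lookup F t = x * Poly_Mapping.lookup h1 t + y * Poly_Mapping.lookup h2 t" for t
    unfolding F_def by (simp add: lookup_add lookup_single0_mult)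
  have FJ: "F \<in> J" unfolding F_def
    using ideal_add[OF J_ideal ideal_mult[OF J_ideal Gt_in_J[OF h1]] ideal_mult[OF J_ideal Gt_in_J[OF h2]]] .
  have gab: "gcd a b \<noteq> 0" using a0 by simp
  have lt0: "Poly_Mapping.lookup F t0 = gcd a b"
    unfolding lF using xy e1 e2 unfolding a_def b_def LC_def t0_def by simp
  then have t0F: "t0 \<in> Poly_Mapping.keys F" using gab by (simp add: in_keys_iff)
  have "le s t0" if s: "s \<in> Poly_Mapping.keys F" for s
  proof -
    have "Poly_Mapping.lookup h1 s \<noteq> 0 \<or> Poly_Mapping.lookup h2 s \<noteq> 0"
      using s unfolding in_keys_iff lF by auto
    then show ?thesis
    proof
      assume "Poly_Mapping.lookup h1 s \<noteq> 0"
      then have "s \<in> Poly_Mapping.keys h1" by (simp add: in_keys_iff)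
      from le_LT[OF sigma this] show ?thesis unfolding e1 t0_def .
    next
      assume "Poly_Mapping.lookup h2 s \<noteq> 0"
      then have "s \<in> Poly_Mapping.keys h2" by (simp add: in_keys_iff)
      from le_LT[OF sigma this] show ?thesis unfolding e2 t0_def .
    qed
  qed
  then have LTF: "LT le F = t0" using LT_eqI[OF sigma t0F] by blast
  have LCF: "LC le F = gcd a b" unfolding LC_def LTF lt0 ..
  have F0: "F \<noteq> 0" using t0F by auto
  obtain h3 where h3: "h3 \<in> Gt" "LM le h3 dvd LM le F" using Gt_strong[OF FJ F0] by blast
  have "pp_dvd (LT le h3) (LT le F) \<and> LC le h3 dvd LC le F" by (rule LM_dvd_D[OF sigma F0 h3(2)])
  then have d3: "pp_dvd (LT le h3) (LT le (g k))" and c3: "LC le h3 dvd gcd a b"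
    unfolding LTF LCF t0_def by simp_all
  have e3: "LT le h3 = LT le (g k)" by (rule Gt_LT_eq[OF h3(1) k d3])
  have "LC le h3 dvd a" using c3 by (rule dvd_trans) simp
  then have "LM le h3 dvd LM le h1" using e3 e1 by (intro LM_dvd_I) (simp_all add: pp_dvd_refl a_def)
  then have 1: "h3 = h1" by (rule Gt_minimal[OF h3(1) h1])
  have "LC le h3 dvd b" using c3 by (rule dvd_trans) simp
  then have "LM le h3 dvd LM le h2" using e3 e2 by (intro LM_dvd_I) (simp_all add: pp_dvd_refl b_def)
  then have 2: "h3 = h2" by (rule Gt_minimal[OF h3(1) h2])
  show ?thesis using 1 2 by simp
qed

end




context thm37 begin

lemma part_b:
  assumes gtf: "\<forall>k\<in>{1..r}. gtf k \<in> Gt \<and> LT le (gtf k) = LT le (g k)"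
  shows "is_minimal_GB le (to_rat_poly ` gtf ` {1..r}) I"
proof -
  define G' where "G' = to_rat_poly ` gtf ` {1..r}"
  have G'I: "G' \<subseteq> I" unfolding G'_def using gtf J_to_I Gt_in_J by blast
  have LTG: "LT le (to_rat_poly (gtf k)) = LT le (g k)" if "k \<in> {1..r}" for k
    using gtf that by (simp add: LT_to_rat)
  have nzG: "to_rat_poly (gtf k) \<noteq> 0" if "k \<in> {1..r}" for k
    using gtf that Gt_nz by (simp add: to_rat_eq0_iff)
  have fin: "finite G'" unfolding G'_def by simp
  have n0: "0 \<notin> G'" unfolding G'_def using nzG by auto
  have GB: "\<forall>f\<in>I. f \<noteq> 0 \<longrightarrow> (\<exists>h\<in>G'. pp_dvd (LT le h) (LT le f))"
  proof (intro ballI impI)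
    fix f assume f: "f \<in> I" "f \<noteq> 0"
    obtain k where k: "k \<in> {1..r}" "pp_dvd (LT le (g k)) (LT le f)" using G_GB[OF f] by blast
    have "to_rat_poly (gtf k) \<in> G'" unfolding G'_def using k(1) by blast
    then show "\<exists>h\<in>G'. pp_dvd (LT le h) (LT le f)" using k LTG by metis
  qed
  have mini: "\<forall>a\<in>G'. \<forall>b\<in>G'. a \<noteq> b \<longrightarrow> \<not> pp_dvd (LT le a) (LT le b)"
  proof (intro ballI impI)
    fix a b assume a: "a \<in> G'" and b: "b \<in> G'" and ab: "a \<noteq> b"
    obtain k where k: "k \<in> {1..r}" "a = to_rat_poly (gtf k)" using a unfolding G'_def by blast
    obtain k' where k': "k' \<in> {1..r}" "b = to_rat_poly (gtf k')" using b unfolding G'_def by blast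
    have "k \<noteq> k'" using ab k k' by blast
    then show "\<not> pp_dvd (LT le a) (LT le b)"
      using G_min[OF k'(1) k(1)] k k' LTG by metis
  qed
  have gen1: "ideal_gen G' \<subseteq> I" by (rule ideal_gen_least[OF I_ideal G'I])
  have IG: "is_ideal (ideal_gen G')" by (rule ideal_gen_ideal)
  have main: "\<forall>f. f \<in> I \<longrightarrow> f \<noteq> 0 \<longrightarrow> LT le f = t \<longrightarrow> f \<in> ideal_gen G'" for t
    using wf_lt[OF sigma]
  proof (induction t rule: wf_induct_rule)
    case (less t)
    show ?case
    proof (intro allI impI)
      fix f assume f: "f \<in> I" "f \<noteq> 0" "LT le f = t"
      obtain k where k: "k \<in> {1..r}" "pp_dvd (LT le (g k)) (LT le f)" using G_GB[OF f(1,2)] by blast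
      obtain u where u: "LT le f = LT le (g k) + u" using k(2) unfolding pp_dvd_def by blast
      define p where "p = to_rat_poly (gtf k)"
      have p0: "p \<noteq> 0" unfolding p_def by (rule nzG[OF k(1)])
      have LTp: "LT le p = LT le (g k)" unfolding p_def by (rule LTG[OF k(1)])
      have pG: "p \<in> G'" unfolding p_def G'_def using k(1) by blast
      have pI: "p \<in> I" using pG G'I by blast
      have u': "LT le f = u + LT le p" using u LTp by (simp add: add.commute)
      define m where "m = Poly_Mapping.single u (LC le f / LC le p) * p"
      define f' where "f' = f - m"
      have mG: "m \<in> ideal_gen G'" unfolding m_def by (rule ideal_mult[OF IG ideal_gen_sub[OF pG]])
      have f'I: "f' \<in> I" unfolding f'_def m_def by (rule ideal_diff[OF I_ideal f(1) ideal_mult[OF I_ideal pI]])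
      have red: "\<forall>s\<in>Poly_Mapping.keys f'. le s (LT le f) \<and> s \<noteq> LT le f"
        unfolding f'_def m_def by (rule reduce_step[OF sigma f(2) p0 u'])
      have ff: "f = f' + m" unfolding f'_def by simp
      show "f \<in> ideal_gen G'"
      proof (cases "f' = 0")
        case True then show ?thesis using ff mG by simp
      next
        case False
        have "LT le f' \<in> Poly_Mapping.keys f'" by (rule LT_in_keys[OF sigma False])
        then have "(LT le f', t) \<in> {(s, t). le s t \<and> s \<noteq> t}" using red f(3) by simp
        then have "f' \<in> ideal_gen G'" using less f'I False by blast
        then show ?thesis using ff mG ideal_add[OF IG] by simp
      qed
    qed
  qed
  have gen2: "I \<subseteq> ideal_gen G'"
  proof
    fix f assume f: "f \<in> I"
    show "f \<in> ideal_gen G'"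
    proof (cases "f = 0")
      case True then show ?thesis using ideal_zero[OF IG] by simp
    next
      case False then show ?thesis using main[of "LT le f"] f by blast
    qed
  qed
  have "ideal_gen G' = I" using gen1 gen2 by (rule subset_antisym)
  then show ?thesis unfolding is_minimal_GB_def is_GB_def G'_def[symmetric]
    using fin n0 GB mini by blast
qed

end




context thm37 begin

definition good :: "nat \<Rightarrow> int \<Rightarrow> ('v, rat) mpoly \<Rightarrow> bool" where
  "good i p h \<longleftrightarrow> zpp p h \<and> (\<forall>s\<in>Poly_Mapping.keys h. le s (LT le (g i)) \<and> s \<noteq> LT le (g i) \<and>
      (\<forall>k\<in>{1..r}. \<not> pp_dvd (LT le (g k)) s))"

lemma division_zp:
  assumes i: "i \<in> {1..r}" and p: "prime p" and nd: "\<forall>j\<in>{1..<i}. \<not> p dvd den (g j)"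
    and h: "zpp p h" "\<forall>s\<in>Poly_Mapping.keys h. le s (LT le (g i)) \<and> s \<noteq> LT le (g i)"
  shows "\<exists>h'. good i p h' \<and> h - h' \<in> I"
proof -
  define Ti where "Ti = LT le (g i)"
  have good0: "good i p 0" unfolding good_def zpp_def using zp_0[OF p] by simp
  have main: "\<forall>h. zpp p h \<longrightarrow> (\<forall>s\<in>Poly_Mapping.keys h. le s Ti \<and> s \<noteq> Ti) \<longrightarrow> h \<noteq> 0 \<longrightarrow> LT le h = t
     \<longrightarrow> (\<exists>h'. good i p h' \<and> h - h' \<in> I)" for t
    using wf_lt[OF sigma]
  proof (induction t rule: wf_induct_rule)
    case (less t)
    show ?case
    proof (intro allI impI)
      fix h assume zh: "zpp p h" and kh: "\<forall>s\<in>Poly_Mapping.keys h. le s Ti \<and> s \<noteq> Ti"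
        and h0: "h \<noteq> 0" and ht: "LT le h = t"
      have LTk: "LT le h \<in> Poly_Mapping.keys h" by (rule LT_in_keys[OF sigma h0])
      have LTh: "le (LT le h) Ti" "LT le h \<noteq> Ti" using kh LTk by auto
      have zLC: "zp p (LC le h)" using zh unfolding zpp_def LC_def by simp
      show "\<exists>h'. good i p h' \<and> h - h' \<in> I"
      proof (cases "\<exists>k\<in>{1..r}. pp_dvd (LT le (g k)) (LT le h)")
        case True
        then obtain k where k: "k \<in> {1..r}" "pp_dvd (LT le (g k)) (LT le h)" by blast
        obtain u where u: "LT le h = LT le (g k) + u" using k(2) unfolding pp_dvd_def by blast
        have u': "LT le h = u + LT le (g k)" using u by (simp add: add.commute)
        have ki: "k < i"
        proof (rule ccontr)
          assume "\<not> k < i"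
          then have "le Ti (LT le (g k))" unfolding Ti_def using sorted_le[OF i k(1)] by simp
          moreover have "le (LT le (g k)) (LT le h)" by (rule to_dvd[OF sigma k(2)])
          ultimately have "le Ti (LT le h)" by (rule to_trans[OF sigma])
          then have "Ti = LT le h" using LTh(1) by (rule to_antisym[OF sigma])
          then show False using LTh(2) by simp
        qed
        then have "k \<in> {1..<i}" using k(1) by simp
        then have "\<not> p dvd den (g k)" using nd by blast
        then have zg: "zpp p (g k)" by (rule den_zpp[OF p])
        have gk0: "g k \<noteq> 0" by (rule G_nz[OF k(1)])
        have LC1: "LC le (g k) = 1" by (rule G_LC[OF k(1)])
        define m where "m = Poly_Mapping.single u (LC le h / LC le (g k)) * g k"
        define h1 where "h1 = h - m"
        have mI: "m \<in> I" unfolding m_def by (rule ideal_mult[OF I_ideal G_in_I[OF k(1)]])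
        have zm: "zpp p m" unfolding m_def LC1 using zpp_single_mult[OF p _ zg] zLC by simp
        have zh1: "zpp p h1" unfolding h1_def by (rule zpp_diff[OF p zh zm])
        have red: "\<forall>s\<in>Poly_Mapping.keys h1. le s (LT le h) \<and> s \<noteq> LT le h"
          unfolding h1_def m_def by (rule reduce_step[OF sigma h0 gk0 u'])
        have kh1: "\<forall>s\<in>Poly_Mapping.keys h1. le s Ti \<and> s \<noteq> Ti"
        proof
          fix s assume s: "s \<in> Poly_Mapping.keys h1"
          have a: "le s (LT le h)" "s \<noteq> LT le h" using red s by auto
          have b: "le s Ti" by (rule to_trans[OF sigma a(1) LTh(1)])
          have "s \<noteq> Ti"
          proof
            assume "s = Ti"
            then have "le Ti (LT le h)" using a(1) by simp
            then have "Ti = LT le h" using LTh(1) by (rule to_antisym[OF sigma])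
            then show False using LTh(2) by simp
          qed
          then show "le s Ti \<and> s \<noteq> Ti" using b by simp
        qed
        have hh1: "h - h1 = m" unfolding h1_def by simp
        show ?thesis
        proof (cases "h1 = 0")
          case True
          then have "h - 0 \<in> I" using hh1 mI by simp
          then show ?thesis using good0 by blast
        next
          case False
          have "LT le h1 \<in> Poly_Mapping.keys h1" by (rule LT_in_keys[OF sigma False])
          then have "(LT le h1, t) \<in> {(s, t). le s t \<and> s \<noteq> t}" using red ht by simp
          then obtain h1' where h1': "good i p h1'" "h1 - h1' \<in> I"
            using less zh1 kh1 False by blast
          have "h - h1' = m + (h1 - h1')" unfolding h1_def by (simp add: algebra_simps)
          then have "h - h1' \<in> I" using ideal_add[OF I_ideal mI h1'(2)] by (simp only:)
          then show ?thesis using h1'(1) by blast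
        qed
      next
        case False
        then have irr: "\<forall>k\<in>{1..r}. \<not> pp_dvd (LT le (g k)) (LT le h)" by blast
        define m where "m = Poly_Mapping.single (LT le h) (LC le h)"
        define rest where "rest = h - m"
        have lrest: "Poly_Mapping.lookup rest s = (if s = LT le h then 0 else Poly_Mapping.lookup h s)" for s
          unfolding rest_def m_def by (simp add: lookup_minus lookup_single LC_def when_def)
        have krest: "s \<in> Poly_Mapping.keys h \<and> s \<noteq> LT le h" if "s \<in> Poly_Mapping.keys rest" for s
          using that unfolding in_keys_iff lrest by (auto split: if_splits)
        have zm: "zpp p m" unfolding m_def by (rule zpp_single[OF p zLC])
        have zr: "zpp p rest" unfolding rest_def by (rule zpp_diff[OF p zh zm])
        have kr: "\<forall>s\<in>Poly_Mapping.keys rest. le s Ti \<and> s \<noteq> Ti" using krest kh by blast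
        have km: "Poly_Mapping.keys m = {LT le h}" unfolding m_def using LC_nz[OF sigma h0] by simp
        have hm: "h = m + rest" unfolding rest_def by simp
        have goodm: "\<forall>s\<in>Poly_Mapping.keys m. le s Ti \<and> s \<noteq> Ti \<and> (\<forall>k\<in>{1..r}. \<not> pp_dvd (LT le (g k)) s)"
          using km LTh irr by simp
        show ?thesis
        proof (cases "rest = 0")
          case True
          have "good i p h" unfolding good_def Ti_def[symmetric] using zh goodm hm True by simp
          moreover have "h - h \<in> I" using ideal_zero[OF I_ideal] by simp
          ultimately show ?thesis by blast
        next
          case False
          have "LT le rest \<in> Poly_Mapping.keys rest" by (rule LT_in_keys[OF sigma False])
          then have "le (LT le rest) (LT le h)" "LT le rest \<noteq> LT le h"
            using krest le_LT[OF sigma] by blast+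
          then have "(LT le rest, t) \<in> {(s, t). le s t \<and> s \<noteq> t}" using ht by simp
          then obtain r' where r': "good i p r'" "rest - r' \<in> I"
            using less zr kr False by blast
          define h' where "h' = m + r'"
          have "h - h' = rest - r'" unfolding h'_def rest_def by simp
          then have hI: "h - h' \<in> I" using r'(2) by simp
          have zh': "zpp p h'" unfolding h'_def using zpp_add[OF p zm] r'(1) unfolding good_def by blast
          have "\<forall>s\<in>Poly_Mapping.keys h'. le s Ti \<and> s \<noteq> Ti \<and> (\<forall>k\<in>{1..r}. \<not> pp_dvd (LT le (g k)) s)"
          proof
            fix s assume s: "s \<in> Poly_Mapping.keys h'"
            then have "s \<in> Poly_Mapping.keys m \<or> s \<in> Poly_Mapping.keys r'"
              unfolding h'_def using keys_add[of m r'] by blast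
            then show "le s Ti \<and> s \<noteq> Ti \<and> (\<forall>k\<in>{1..r}. \<not> pp_dvd (LT le (g k)) s)"
              using goodm r'(1) unfolding good_def Ti_def by blast
          qed
          then have "good i p h'" using zh' unfolding good_def Ti_def by blast
          then show ?thesis using hI by blast
        qed
      qed
    qed
  qed
  show ?thesis
  proof (cases "h = 0")
    case True
    then show ?thesis using good0 ideal_zero[OF I_ideal] by (intro exI[of _ 0]) simp
  next
    case False
    then show ?thesis using main[of "LT le h"] h unfolding Ti_def by blast
  qed
qed

end




context thm37 begin

lemma part_d:
  assumes gtf: "gtf \<in> Gt" "LT le gtf = LT le (g i)"
    and i: "i \<in> {1..r}" and p: "prime p" and pd: "p dvd den (g i)"
    and nd: "\<forall>j\<in>{1..<i}. \<not> p dvd den (g j)"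
  shows "p dvd LC le gtf"
proof (rule ccontr)
  assume npc: "\<not> p dvd LC le gtf"
  define c where "c = LC le gtf"
  define Ti where "Ti = LT le (g i)"
  define f where "f = to_rat_poly gtf"
  have c0: "c \<noteq> 0" unfolding c_def by (rule LC_nz[OF sigma Gt_nz[OF gtf(1)]])
  have fI: "f \<in> I" unfolding f_def by (rule J_to_I[OF Gt_in_J[OF gtf(1)]])
  have LTf: "LT le f = Ti" unfolding f_def Ti_def LT_to_rat by (rule gtf(2))
  have LCf: "LC le f = rat_of_int c" unfolding f_def c_def LC_to_rat ..
  define tail where "tail = f - Poly_Mapping.single Ti (rat_of_int c)"
  have ztail: "zpp p tail" unfolding tail_def f_def
    by (rule zpp_diff[OF p zpp_to_rat[OF p] zpp_single[OF p zp_int[OF p]]])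
  have ktail: "\<forall>s\<in>Poly_Mapping.keys tail. le s (LT le (g i)) \<and> s \<noteq> LT le (g i)"
  proof
    fix s assume s: "s \<in> Poly_Mapping.keys tail"
    have "Poly_Mapping.lookup tail Ti = 0" unfolding tail_def using LCf LTf
      by (simp add: lookup_minus LC_def)
    then have sTi: "s \<noteq> Ti" using s by (auto simp: in_keys_iff)
    then have "s \<in> Poly_Mapping.keys f" using s unfolding tail_def
      by (simp add: in_keys_iff lookup_minus lookup_single when_def)
    then have "le s Ti" using le_LT[OF sigma] LTf by metis
    then show "le s (LT le (g i)) \<and> s \<noteq> LT le (g i)" using sTi unfolding Ti_def by simp
  qed
  obtain h' where h': "good i p h'" "tail - h' \<in> I"
    using division_zp[OF i p nd ztail ktail] by blast
  define F where "F = Poly_Mapping.single Ti (rat_of_int c) + h'"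
  have "F = f - (tail - h')" unfolding F_def tail_def by simp
  then have FI: "F \<in> I" using ideal_diff[OF I_ideal fI h'(2)] by simp
  define D where "D = F - Poly_Mapping.single 0 (rat_of_int c) * g i"
  have DI: "D \<in> I" unfolding D_def by (rule ideal_diff[OF I_ideal FI ideal_mult[OF I_ideal G_in_I[OF i]]])
  have lD: "Poly_Mapping.lookup D s = (if s = Ti then rat_of_int c else 0) + Poly_Mapping.lookup h' s
      - rat_of_int c * Poly_Mapping.lookup (g i) s" for s
    unfolding D_def F_def by (simp add: lookup_minus lookup_add lookup_single when_def lookup_single0_mult del: single_of_int)
  have D0: "D = 0"
  proof (rule ccontr)
    assume "D \<noteq> 0"
    then have sD: "LT le D \<in> Poly_Mapping.keys D" by (rule LT_in_keys[OF sigma])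
    obtain k where k: "k \<in> {1..r}" "pp_dvd (LT le (g k)) (LT le D)" using G_GB[OF DI \<open>D \<noteq> 0\<close>] by blast
    define s where "s = LT le D"
    have ns: "Poly_Mapping.lookup D s \<noteq> 0" using sD unfolding s_def by (simp add: in_keys_iff)
    show False
    proof (cases "s = Ti")
      case True
      have "Ti \<notin> Poly_Mapping.keys h'" using h'(1) unfolding good_def Ti_def by blast
      then have "Poly_Mapping.lookup h' Ti = 0" by (simp add: in_keys_iff)
      moreover have "Poly_Mapping.lookup (g i) Ti = 1" using G_LC[OF i] unfolding LC_def Ti_def .
      ultimately have "Poly_Mapping.lookup D s = 0" unfolding lD True by simp
      then show False using ns by simp
    next
      case False
      then have "Poly_Mapping.lookup h' s \<noteq> 0 \<or> Poly_Mapping.lookup (g i) s \<noteq> 0"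
        using ns unfolding lD by auto
      then show False
      proof
        assume "Poly_Mapping.lookup h' s \<noteq> 0"
        then have "s \<in> Poly_Mapping.keys h'" by (simp add: in_keys_iff)
        then have "\<not> pp_dvd (LT le (g k)) s" using h'(1) k(1) unfolding good_def by blast
        then show False using k(2) unfolding s_def by simp
      next
        assume "Poly_Mapping.lookup (g i) s \<noteq> 0"
        then have "s \<in> Poly_Mapping.keys (g i)" by (simp add: in_keys_iff)
        from G_tail[OF i this _ k(1)] False have "\<not> pp_dvd (LT le (g k)) s" unfolding Ti_def by simp
        then show False using k(2) unfolding s_def by simp
      qed
    qed
  qed
  have zF: "zpp p F" unfolding F_def
    using zpp_add[OF p zpp_single[OF p zp_int[OF p]]] h'(1) unfolding good_def by blast
  have "zpp p (g i)" unfolding zpp_def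
  proof
    fix t
    have "Poly_Mapping.lookup D t = 0" using D0 by simp
    then have "Poly_Mapping.lookup F t = rat_of_int c * Poly_Mapping.lookup (g i) t"
      unfolding D_def by (simp add: lookup_minus lookup_single0_mult del: single_of_int)
    then have "Poly_Mapping.lookup (g i) t = Poly_Mapping.lookup F t / rat_of_int c" using c0 by simp
    moreover have "zp p (Poly_Mapping.lookup F t / rat_of_int c)"
      using zp_div[OF p _ npc[folded c_def]] zF unfolding zpp_def by blast
    ultimately show "zp p (Poly_Mapping.lookup (g i) t)" by simp
  qed
  then have "\<not> p dvd den (g i)" by (rule zpp_den[OF p])
  then show False using pd by simp
qed

end




context thm37 begin

lemma main:
  shows "\<exists>s gt. r \<le> s \<and> bij_betw gt {1..s} Gt \<and>
     (\<forall>i\<in>{1..r}. LT le (gt i) = LT le (g i)) \<and>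
     (\<forall>i\<in>{r+1..s}. \<exists>k\<in>{1..r}. pp_proper_multiple (LT le (gt i)) (LT le (g k))) \<and>
     is_minimal_GB le (to_rat_poly ` gt ` {1..r}) I \<and>
     (\<forall>i\<in>{1..r}. LC le (gt i) dvd LC le (prim (g i))) \<and>
     (\<forall>i\<in>{1..r}. \<forall>p::int. prime p \<and> p dvd den (g i) \<and> (\<forall>j\<in>{1..<i}. \<not> p dvd den (g j))
         \<longrightarrow> p dvd LC le (gt i))"
proof -
  have "\<forall>k\<in>{1..r}. \<exists>h. h \<in> Gt \<and> LT le h = LT le (g k) \<and> LC le h dvd LC le (prim (g k))"
    using exists_gt by blast
  then obtain gtf where gtf: "\<forall>k\<in>{1..r}. gtf k \<in> Gt \<and> LT le (gtf k) = LT le (g k) \<and> LC le (gtf k) dvd LC le (prim (g k))"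
    by (rule bchoice[THEN exE]) blast
  define R where "R = Gt - gtf ` {1..r}"
  have finR: "finite R" unfolding R_def using Gt_fin by simp
  obtain e where e: "bij_betw e {0..<card R} R" using ex_bij_betw_nat_finite[OF finR] by blast
  define s where "s = r + card R"
  define gt where "gt = (\<lambda>i. if i \<le> r then gtf i else e (i - Suc r))"
  have gt1: "gt i = gtf i" if "i \<in> {1..r}" for i using that unfolding gt_def by simp
  have img1: "gt ` {1..r} = gtf ` {1..r}" using gt1 by (rule image_cong[OF refl])
  have B1: "bij_betw gt {1..r} (gtf ` {1..r})"
    unfolding bij_betw_def
  proof
    show "inj_on gt {1..r}"
    proof (rule inj_onI)
      fix x y assume x: "x \<in> {1..r}" and y: "y \<in> {1..r}" and xy: "gt x = gt y"
      have "LT le (g x) = LT le (g y)" using gtf x y xy gt1[OF x] gt1[OF y] by metis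
      then show "x = y" by (rule LT_inj[OF x y])
    qed
  qed (rule img1)
  have Bsh: "bij_betw (\<lambda>i. i - Suc r) {r+1..s} {0..<card R}"
  proof (rule bij_betw_byWitness[where f'="\<lambda>j. j + Suc r"])
    show "\<forall>a\<in>{r + 1..s}. a - Suc r + Suc r = a" by auto
    show "\<forall>a'\<in>{0..<card R}. a' + Suc r - Suc r = a'" by auto
    show "(\<lambda>i. i - Suc r) ` {r + 1..s} \<subseteq> {0..<card R}" unfolding s_def by auto
    show "(\<lambda>j. j + Suc r) ` {0..<card R} \<subseteq> {r + 1..s}" unfolding s_def by auto
  qed
  have B2': "bij_betw (e \<circ> (\<lambda>i. i - Suc r)) {r+1..s} R" by (rule bij_betw_trans[OF Bsh e])
  have B2: "bij_betw gt {r+1..s} R"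
    using B2' by (rule bij_betw_cong[THEN iffD1, rotated]) (auto simp: gt_def)
  have disj: "gtf ` {1..r} \<inter> R = {}" unfolding R_def by blast
  have "bij_betw gt ({1..r} \<union> {r+1..s}) (gtf ` {1..r} \<union> R)" by (rule bij_betw_combine[OF B1 B2 disj])
  moreover have "{1..r} \<union> {r+1..s} = {1..s}" unfolding s_def by auto
  moreover have "gtf ` {1..r} \<union> R = Gt" unfolding R_def using gtf by blast
  ultimately have bij: "bij_betw gt {1..s} Gt" by simp
  have a1: "\<forall>i\<in>{1..r}. LT le (gt i) = LT le (g i)" using gtf gt1 by simp
  have a2: "\<forall>i\<in>{r+1..s}. \<exists>k\<in>{1..r}. pp_proper_multiple (LT le (gt i)) (LT le (g k))"
  proof
    fix i assume i: "i \<in> {r+1..s}"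
    have giR: "gt i \<in> R" using B2 i by (metis bij_betwE)
    then have giG: "gt i \<in> Gt" and ngi: "gt i \<notin> gtf ` {1..r}" unfolding R_def by auto
    obtain k where k: "k \<in> {1..r}" "pp_dvd (LT le (g k)) (LT le (gt i))" using Gt_LT[OF giG] by blast
    obtain u where u: "LT le (gt i) = LT le (g k) + u" using k(2) unfolding pp_dvd_def by blast
    have "u \<noteq> 0"
    proof
      assume "u = 0"
      then have "LT le (gt i) = LT le (g k)" using u by simp
      then have "gt i = gtf k" using unique_gt[OF giG _ k(1)] gtf k(1) by simp
      then show False using ngi k(1) by blast
    qed
    then show "\<exists>k\<in>{1..r}. pp_proper_multiple (LT le (gt i)) (LT le (g k))"
      using k(1) u unfolding pp_proper_multiple_def by blast
  qed
  have b: "is_minimal_GB le (to_rat_poly ` gt ` {1..r}) I"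
    unfolding img1 by (rule part_b) (use gtf in simp)
  have c: "\<forall>i\<in>{1..r}. LC le (gt i) dvd LC le (prim (g i))" using gtf gt1 by simp
  have d: "\<forall>i\<in>{1..r}. \<forall>p::int. prime p \<and> p dvd den (g i) \<and> (\<forall>j\<in>{1..<i}. \<not> p dvd den (g j))
         \<longrightarrow> p dvd LC le (gt i)"
  proof (intro ballI allI impI)
    fix i p assume i: "i \<in> {1..r}" and hp: "prime (p::int) \<and> p dvd den (g i) \<and> (\<forall>j\<in>{1..<i}. \<not> p dvd den (g j))"
    have "gtf i \<in> Gt" "LT le (gtf i) = LT le (g i)" using gtf i by simp_all
    from part_d[OF this i] hp have "p dvd LC le (gtf i)" by blast
    then show "p dvd LC le (gt i)" using gt1[OF i] by simp
  qed
  have "r \<le> s" unfolding s_def by simp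
  then show ?thesis using bij a1 a2 b c d by blast
qed

end

theorem theorem3p7:
  fixes le :: "('v::finite) pp \<Rightarrow> 'v pp \<Rightarrow> bool"
    and I :: "('v, rat) mpoly set"
    and g :: "nat \<Rightarrow> ('v, rat) mpoly"
    and r :: nat
    and Gt :: "('v, int) mpoly set"
  assumes sigma: "term_order le"
    and I_ideal: "is_ideal I"
    and I_nonzero: "I \<noteq> {0}"
    and G_red: "is_reduced_GB le (g ` {1..r}) I"
    and G_sorted: "\<And>i j. 1 \<le> i \<Longrightarrow> i < j \<Longrightarrow> j \<le> r \<Longrightarrow>
                      LT le (g i) \<noteq> LT le (g j) \<and> le (LT le (g i)) (LT le (g j))"
    and Gt_min: "is_minimal_strong_GB le Gt (ideal_gen (prim ` g ` {1..r}))"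
  shows "\<exists>s gt. r \<le> s \<and> bij_betw gt {1..s} Gt \<and>
     \<comment> \<open>(a)\<close>
     (\<forall>i\<in>{1..r}. LT le (gt i) = LT le (g i)) \<and>
     (\<forall>i\<in>{r+1..s}. \<exists>k\<in>{1..r}. pp_proper_multiple (LT le (gt i)) (LT le (g k))) \<and>
     \<comment> \<open>(b)\<close>
     is_minimal_GB le (to_rat_poly ` gt ` {1..r}) I \<and>
     \<comment> \<open>(c)\<close>
     (\<forall>i\<in>{1..r}. LC le (gt i) dvd LC le (prim (g i))) \<and>
     \<comment> \<open>(d)\<close>
     (\<forall>i\<in>{1..r}. \<forall>p::int. prime p \<and> p dvd den (g i) \<and> (\<forall>j\<in>{1..<i}. \<not> p dvd den (g j))
         \<longrightarrow> p dvd LC le (gt i))"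
proof -
  interpret thm37 le I g r Gt
    using assms by (unfold_locales) auto
  show ?thesis by (rule main)
qed


end
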